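(* Consider the model described in the context, with fixed $N_\text{c}$, $s$, and a weighting factor $\alpha \ge 0$. Then the system cost $z(r) = \mathbb{E}\{P\}(r) + \alpha\, \mathbb{E}\{n\}(r)$, regarded as a function of the data rate $r \in (\lambda L, \infty)$, has a unique stationary point $r^*$ (which is its minimizer), and $r^*$ is characterized by \[ \Omega\!\left( \frac{\alpha g \eta}{\mathrm{e}} \left(\frac{r^*}{r^* - \lambda L}\right)^2 + \frac{g \eta P_\text{s} - 1}{\mathrm{e}} \right) = \frac{r^* \ln 2}{W} - 1 , \] where $\Omega(\cdot)$ is the principal branch of the Lambert W function, $P_\text{s} = P_\text{o} - P_\text{sleep} - 2\lambda E_\text{sw}$ and $P_\text{o} = N_\text{c} P_\text{Bm} + \Delta_{P_\text{B}} c_0 s^{\beta-1} + P_\text{RF}$.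
   Context: A virtual base station (VBS) is modeled as an M/G/1 processor-sharing queue: flows arrive at rate $\lambda>0$, each with mean size $L>0$, and are served at total rate $r$ (bits/s) whenever the queue is nonempty; $r > \lambda L$, and the load is $\rho = \lambda L / r$. The mean queue length is $\mathbb{E}\{n\} = \rho/(1-\rho) = \lambda L/(r-\lambda L)$ and the mean delay is $\mathbb{E}\{D\} = \mathbb{E}\{n\}/\lambda$. The transmit power $P_\text{out}$ needed for rate $r$ is given by $r = W\log_2(1 + g P_\text{out})$, i.e. $P_\text{out} = (2^{r/W}-1)/g$, where $W>0$ is the bandwidth and $g>0$ the channel gain. When busy the VBS consumes $P_\text{B} + P_\text{R}$ with RRH power $P_\text{R} = P_\text{out}/\eta + P_\text{RF}$ ($\eta\in(0,1]$ the power amplifier efficiency, $P_\text{RF}\ge 0$) and BBU power $P_\text{B} = N_\text{c} P_\text{Bm} + \Delta_{P_\text{B}} c_0 s^{\beta-1} + \Delta_{P_\text{B}}\kappa r s^{\beta-1}$, where $N_\text{c}$ is the number of active CPU cores, $s>0$ the CPU speed, $P_\text{Bm}$ the minimum per-core power, $\Delta_{P_\text{B}} = (P_\text{BM}-P_\text{Bm})/s_0^\beta \ge 0$, and $c_0,\kappa,\beta$ are nonnegative constants. When the queue is empty the VBS sleeps with power $P_\text{sleep}$, and each on/off switch costs energy $E_\text{sw}\ge 0$. With $\mathbb{E}\{T_\text{c}\} = 1/(\lambda(1-\rho))$ the mean length of a busy-plus-idle cycle, the average power is $\mathbb{E}\{P\} = \rho (P_\text{B} + P_\text{R}) + (1-\rho)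 P_\text{sleep} + 2E_\text{sw}/\mathbb{E}\{T_\text{c}\}$.
   Formalization: The case alpha = 0 is covered only when $\mathrm{e}^{\lambda L \ln 2/W}(\lambda L \ln 2/W - 1) + 1 < g \eta P_\text{s}$; for alpha > 0 no further hypothesis is imposed. Apart from conventions, each condition added here is assumed in the paper as well or is needed for the statement above to hold. *)

theory Defs
  imports Complex_Main
begin

text \<open>Principal branch of the Lambert W function: for x \<ge> -1/e, the unique
  w \<ge> -1 with w * exp w = x.\<close>
definition lambertW :: "real \<Rightarrow> real" where
  "lambertW x = (THE w. w \<ge> -1 \<and> w * exp w = x)"

definition Delta_PB :: "real \<Rightarrow> real \<Rightarrow> real \<Rightarrow> real \<Rightarrow> real" where
  "Delta_PB PBM PBm s0 beta = (PBM - PBm) / s0 powr beta"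

definition P_B :: "nat \<Rightarrow> real \<Rightarrow> real \<Rightarrow> real \<Rightarrow> real \<Rightarrow> real \<Rightarrow> real \<Rightarrow> real \<Rightarrow> real" where
  "P_B Nc PBm Delta c0 kappa beta s r =
     real Nc * PBm + Delta * c0 * s powr (beta - 1) + Delta * kappa * r * s powr (beta - 1)"

text \<open>Transmit power needed for rate r: r = W log2(1 + g Pout).\<close>
definition P_out :: "real \<Rightarrow> real \<Rightarrow> real \<Rightarrow> real" where
  "P_out W g r = (2 powr (r / W) - 1) / g"

definition P_R :: "real \<Rightarrow> real \<Rightarrow> real \<Rightarrow> real \<Rightarrow> real \<Rightarrow> real" where
  "P_R eta PRF W g r = P_out W g r / eta + PRF"

definition load :: "real \<Rightarrow> real \<Rightarrow> real \<Rightarrow> real" where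
  "load lam L r = lam * L / r"

text \<open>Mean queue length E{n} of the M/G/1-PS queue.\<close>
definition mean_queue :: "real \<Rightarrow> real \<Rightarrow> real \<Rightarrow> real" where
  "mean_queue lam L r = lam * L / (r - lam * L)"

text \<open>Mean busy-plus-idle cycle length E{T_c}.\<close>
definition mean_cycle :: "real \<Rightarrow> real \<Rightarrow> real \<Rightarrow> real" where
  "mean_cycle lam L r = 1 / (lam * (1 - load lam L r))"

definition avg_power :: "real \<Rightarrow> real \<Rightarrow> real \<Rightarrow> real \<Rightarrow> real \<Rightarrow> real \<Rightarrow> real \<Rightarrow> real" where
  "avg_power PB PR Psleep Esw lam L r =
     load lam L r * (PB + PR) + (1 - load lam L r) * Psleep + 2 * Esw / mean_cycle lam L r"

definition sys_cost ::
  "real \<Rightarrow> real \<Rightarrow> real \<Rightarrow> real \<Rightarrow> real \<Rightarrow> real \<Rightarrow> nat \<Rightarrow> real \<Rightarrow> real \<Rightarrow> real \<Rightarrow> real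
   \<Rightarrow> real \<Rightarrow> real \<Rightarrow> real \<Rightarrow> real \<Rightarrow> real \<Rightarrow> real \<Rightarrow> real" where
  "sys_cost lam L W g eta PRF Nc PBm Delta c0 kappa beta s Psleep Esw alpha r =
     avg_power (P_B Nc PBm Delta c0 kappa beta s r) (P_R eta PRF W g r) Psleep Esw lam L r
     + alpha * mean_queue lam L r"

end

theory Submission imports Defs begin

lemma wexp_strict_mono:
  fixes p q :: real
  assumes "-1 \<le> p" "p < q"
  shows "p * exp p < q * exp q"
proof (rule DERIV_pos_imp_increasing_open[OF assms(2)])
  fix x assume "p < x" "x < q"
  then show "\<exists>y. DERIV (\<lambda>w. w * exp w) x :> y \<and> y > 0"
  proof (intro exI conjI)
    show "DERIV (\<lambda>w. w * exp w) x :> exp x + x * exp x"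
      by (auto intro!: derivative_eq_intros)
    have "0 < exp x * (1 + x)" using \<open>p < x\<close> assms by (intro mult_pos_pos) auto
    then show "0 < exp x + x * exp x" by (simp add: algebra_simps)
  qed
next
  show "continuous_on {p..q} (\<lambda>w. w * exp w)" by (intro continuous_intros)
qed

lemma lambertW_eq:
  assumes "w \<ge> -1" "w * exp w = x"
  shows "lambertW x = w"
  unfolding lambertW_def
proof (rule the_equality)
  show "w \<ge> -1 \<and> w * exp w = x" using assms by simp
  fix v assume v: "v \<ge> -1 \<and> v * exp v = x"
  show "v = w"
  proof (rule ccontr)
    assume "v \<noteq> w"
    then consider "v < w" | "w < v" by linarith
    then show False
      using wexp_strict_mono[of v w] wexp_strict_mono[of w v] v assms by auto
  qed
qed


theorem mainTheorem1:
  fixes lam L W g eta PRF PBm PBM s0 s c0 kappa beta Psleep Esw alpha :: real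
    and Nc :: nat
  assumes "lam > 0" and "L > 0" and "W > 0" and "g > 0"
    and "0 < eta" and "eta \<le> 1" and "PRF \<ge> 0"
    and "s > 0" and "s0 > 0" and "Delta_PB PBM PBm s0 beta \<ge> 0"
    and "c0 \<ge> 0" and "kappa \<ge> 0" and "beta \<ge> 0"
    and "Esw \<ge> 0" and "alpha \<ge> 0"
    and nondeg: "alpha > 0 \<or>
       exp (lam * L * ln 2 / W) * (lam * L * ln 2 / W - 1) + 1
         < g * eta * ((real Nc * PBm + Delta_PB PBM PBm s0 beta * c0 * s powr (beta - 1) + PRF)
                      - Psleep - 2 * lam * Esw)"
  shows "let Delta = Delta_PB PBM PBm s0 beta;
             Po = real Nc * PBm + Delta * c0 * s powr (beta - 1) + PRF;
             Ps = Po - Psleep - 2 * lam * Esw;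
             z = sys_cost lam L W g eta PRF Nc PBm Delta c0 kappa beta s Psleep Esw alpha
         in \<exists>rs. lam * L < rs
               \<and> (z has_real_derivative 0) (at rs)
               \<and> (\<forall>r. lam * L < r \<and> (z has_real_derivative 0) (at r) \<longrightarrow> r = rs)
               \<and> (\<forall>r. lam * L < r \<longrightarrow> z rs \<le> z r)
               \<and> lambertW (alpha * g * eta / exp 1 * (rs / (rs - lam * L))^2
                            + (g * eta * Ps - 1) / exp 1)
                   = rs * ln 2 / W - 1"
proof -
  define Delta where "Delta = Delta_PB PBM PBm s0 beta"
  define Po where "Po = real Nc * PBm + Delta * c0 * s powr (beta - 1) + PRF"
  define Ps where "Ps = Po - Psleep - 2 * lam * Esw"
  define z where "z = sys_cost lam L W g eta PRF Nc PBm Delta c0 kappa beta s Psleep Esw alpha"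
  define a where "a = lam * L"
  define c where "c = ln 2 / W"
  define Q where "Q = g * eta * Ps - 1"
  define K where "K = Delta * kappa * s powr (beta - 1)"
  define C0 where "C0 = a * K + Psleep + 2 * Esw * lam"
  define ge where "ge = g * eta"
  define g0 where "g0 = (\<lambda>r::real. exp (c * r) * (c * r - 1) - Q)"
  define h where "h = (\<lambda>r::real. g0 r - alpha * ge * (r / (r - a))^2)"
  have a0: "a > 0" using assms a_def by simp
  have c0: "c > 0" using assms c_def by simp
  have ge0: "ge > 0" using assms ge_def by simp
  have zeq: "z r = a * (Q + exp (c * r)) / (ge * r) + C0 + alpha * a / (r - a)" if "r > 0" for r
  proof -
    have p: "2 powr (r / W) = exp (c * r)" by (simp add: powr_def c_def)
    have "g \<noteq> 0" "eta \<noteq> 0" "r \<noteq> 0" using assms that by auto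
    then show ?thesis
      unfolding z_def sys_cost_def avg_power_def P_B_def P_R_def P_out_def load_def
        mean_cycle_def mean_queue_def p Q_def ge_def C0_def K_def Ps_def Po_def a_def
      by (simp add: field_simps)
  qed
  have zd: "DERIV z r :> a * h r / (ge * r^2)" if "r > a" for r
  proof -
    have d: "DERIV (\<lambda>r. a * (Q + exp (c * r)) / (ge * r) + C0 + alpha * a / (r - a)) r :> a * h r / (ge * r^2)"
      using that a0 ge0
      apply (intro derivative_eq_intros refl)
      apply simp_all
    proof -
      have nz: "r - a \<noteq> 0" "r \<noteq> 0" "ge \<noteq> 0" using that a0 ge0 by auto
      show "((0 * (Q + exp (c * r)) + (0 + exp (c * r) * (0 * r + 1 * c)) * a) * (ge * r) -
         a * (Q + exp (c * r)) * (0 * r + 1 * ge)) / (ge * r * (ge * r)) + 0 +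
        (0 * (r - a) - alpha * a * (1 - 0)) / ((r - a) * (r - a)) = a * h r / (ge * r\<^sup>2)"
        unfolding h_def g0_def using nz
        by (simp add: field_simps power2_eq_square)
    qed
    have ev: "eventually (\<lambda>x. z x = a * (Q + exp (c * x)) / (ge * x) + C0 + alpha * a / (x - a)) (nhds r)"
    proof -
      have "eventually (\<lambda>x. x \<in> {0<..}) (nhds r)"
        using that a0 by (intro eventually_nhds_in_open) auto
      then show ?thesis by (rule eventually_mono) (simp add: zeq)
    qed
    show ?thesis using DERIV_cong_ev[OF refl ev refl] d by simp
  qed
  have g0d: "DERIV g0 x :> exp (c * x) * c^2 * x" for x
    unfolding g0_def by (auto intro!: derivative_eq_intros simp: algebra_simps power2_eq_square)
  have g0mono: "g0 x < g0 y" if "0 < x" "x < y" for x y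
    using that(2)
  proof (rule DERIV_pos_imp_increasing)
    fix t assume "x \<le> t" "t \<le> y"
    then have "t > 0" using that by auto
    then show "\<exists>d. DERIV g0 t :> d \<and> d > 0" using g0d c0 by (intro exI[of _ "exp (c * t) * c^2 * t"]) auto
  qed
  have ratmono: "(y / (y - a))^2 < (x / (x - a))^2" if "a < x" "x < y" for x y
  proof -
    have "y / (y - a) < x / (x - a)" using that a0
      by (simp add: divide_simps) (simp add: algebra_simps)
    moreover have "0 \<le> y / (y - a)" using that a0 by simp
    ultimately show ?thesis by (simp add: power_strict_mono)
  qed
  have hmono: "h x < h y" if "a < x" "x < y" for x y
  proof -
    have "alpha * ge * (y / (y - a))^2 \<le> alpha * ge * (x / (x - a))^2"
      using ratmono[OF that] assms(15) ge0 by (intro mult_left_mono) auto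
    then show ?thesis using g0mono[of x y] that a0 unfolding h_def by auto
  qed
  have hcont: "continuous_on {x..y} h" if "a < x" for x y
  proof -
    have "\<forall>t\<in>{x..y}. t - a \<noteq> 0" using that by auto
    then show ?thesis unfolding h_def g0_def by (intro continuous_intros) auto
  qed
  have g0cont: "isCont g0 a" unfolding g0_def by (intro continuous_intros)
  have ex1: "\<exists>r1>a. h r1 < 0"
  proof (cases "alpha > 0")
    case False
    then have al: "alpha = 0" using assms(15) by simp
    have "g0 a < 0" using nondeg False unfolding g0_def Q_def Ps_def Po_def Delta_def a_def c_def
      by (simp add: algebra_simps)
    moreover have "(g0 \<longlongrightarrow> g0 a) (at_right a)"
      using g0cont by (simp add: isCont_def filterlim_at_split)
    ultimately have "eventually (\<lambda>r. g0 r < 0) (at_right a)"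
      by (rule order_tendstoD(2)[rotated])
    then obtain b where b: "b > a" "\<And>y. y > a \<Longrightarrow> y < b \<Longrightarrow> g0 y < 0"
      unfolding eventually_at_right_field by blast
    show ?thesis using b(2)[of "(a + b) / 2"] b(1) al
      by (intro exI[of _ "(a + b) / 2"]) (auto simp: h_def)
  next
    case True
    define M where "M = max 1 (g0 a + 1)"
    have M0: "M > 0" unfolding M_def by simp
    have "(g0 \<longlongrightarrow> g0 a) (at_right a)"
      using g0cont by (simp add: isCont_def filterlim_at_split)
    moreover have "g0 a < M" unfolding M_def by simp
    ultimately have "eventually (\<lambda>r. g0 r < M) (at_right a)"
      by (rule order_tendstoD(2))
    then obtain b where b: "b > a" "\<And>y. y > a \<Longrightarrow> y < b \<Longrightarrow> g0 y < M"
      unfolding eventually_at_right_field by blast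
    define d where "d = a * sqrt (alpha * ge / M)"
    have d0: "d > 0" using a0 True ge0 M0 unfolding d_def by simp
    have dsq: "d^2 = a^2 * (alpha * ge / M)"
      unfolding d_def using True ge0 M0 by (simp add: power_mult_distrib)
    define t where "t = min ((b - a) / 2) (d / 2)"
    have t0: "t > 0" "t < d" "a + t < b" using b(1) d0 unfolding t_def by (auto simp: min_def field_simps)
    have m: "a * t < a * d" "0 < d * t" using t0 a0 d0 by (auto intro: mult_strict_left_mono)
    have "a / d < (a + t) / t" using t0 a0 d0
      apply (simp add: divide_simps algebra_simps)
      using m by linarith
    then have Y: "(a / d)^2 < ((a + t) / t)^2"
      using a0 d0 by (intro power_strict_mono) auto
    have eqY: "(a / d)^2 = M / (alpha * ge)"
      using dsq a0 d0 True ge0 M0 by (simp add: power_divide field_simps)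
    have "alpha * ge * (a / d)^2 < alpha * ge * ((a + t) / t)^2"
      using Y True ge0 by (intro mult_strict_left_mono) auto
    moreover have "alpha * ge * (a / d)^2 = M" unfolding eqY using True ge0 by simp
    ultimately have "M < alpha * ge * ((a + t) / t)^2" by simp
    moreover have "g0 (a + t) < M" using b(2)[of "a + t"] t0 by auto
    ultimately show ?thesis using t0
      by (intro exI[of _ "a + t"]) (auto simp: h_def)
  qed
  then obtain r1 where r1: "r1 > a" "h r1 < 0" by blast
  define r2 where "r2 = max (2 * a) (max (r1 + 1) ((\<bar>Q\<bar> + 4 * alpha * ge + 2) / c))"
  have r2: "r2 > r1" "r2 \<ge> 2 * a" "c * r2 \<ge> \<bar>Q\<bar> + 4 * alpha * ge + 2"
  proof -
    define B where "B = (\<bar>Q\<bar> + 4 * alpha * ge + 2) / c"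
    have "r2 \<ge> B" "r2 \<ge> r1 + 1" "r2 \<ge> 2 * a" unfolding r2_def B_def by auto
    moreover have "c * B = \<bar>Q\<bar> + 4 * alpha * ge + 2" unfolding B_def using c0 by simp
    moreover have "c * B \<le> c * r2" using \<open>r2 \<ge> B\<close> c0 by (intro mult_left_mono) auto
    ultimately show "r2 > r1" "r2 \<ge> 2 * a" "c * r2 \<ge> \<bar>Q\<bar> + 4 * alpha * ge + 2" by auto
  qed
  have "h r2 > 0"
  proof -
    have "r2 / (r2 - a) \<le> 2" using r2 a0 by (simp add: divide_simps)
    moreover have "0 \<le> r2 / (r2 - a)" using r2 a0 by simp
    ultimately have "(r2 / (r2 - a))^2 \<le> 2^2" by (intro power_mono)
    then have A: "alpha * ge * (r2 / (r2 - a))^2 \<le> alpha * ge * 4"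
      using assms(15) ge0 by (intro mult_left_mono) auto
    have "exp (c * r2) \<ge> 1" using c0 r2 a0 by simp
    moreover have "c * r2 - 1 \<ge> 0" proof -
      have "alpha * ge \<ge> 0" using assms(15) ge0 by simp
      then show ?thesis using r2(3) abs_ge_zero[of Q] by linarith
    qed
    ultimately have "exp (c * r2) * (c * r2 - 1) \<ge> 1 * (c * r2 - 1)"
      by (intro mult_right_mono) auto
    then have "exp (c * r2) * (c * r2 - 1) \<ge> c * r2 - 1" by simp
    moreover have "alpha * ge * 4 = 4 * alpha * ge" by simp
    ultimately show ?thesis using A r2(3) abs_ge_self[of Q] unfolding h_def g0_def by linarith
  qed
  then obtain rs where rs: "r1 \<le> rs" "rs \<le> r2" "h rs = 0"
    using IVT'[of h r1 0 r2] r1 r2 hcont[of r1 r2] by auto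
  have rsa: "rs > a" using rs r1 by simp
  have hz: "h r = 0 \<Longrightarrow> r = rs" if "r > a" for r
    using hmono[of r rs] hmono[of rs r] that rsa rs(3) by (cases r rs rule: linorder_cases) auto
  have stat: "DERIV z rs :> 0" using zd[OF rsa] rs(3) by simp
  have uniq: "r = rs" if "a < r" "DERIV z r :> 0" for r
  proof -
    have "a * h r / (ge * r^2) = 0" using DERIV_unique[OF zd[OF that(1)] that(2)] .
    then have "h r = 0" using a0 ge0 that(1) by auto
    then show ?thesis using hz that(1) by blast
  qed
  have hle: "h x \<le> 0" if "a < x" "x \<le> rs" for x
    using hmono[of x rs] that rs(3) by (cases "x = rs") auto
  have hge: "h x \<ge> 0" if "rs \<le> x" for x
    using hmono[of rs x] that rs(3) rsa by (cases "x = rs") auto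
  have minz: "z rs \<le> z r" if "a < r" for r
  proof (cases "r \<le> rs")
    case True
    show ?thesis
    proof (rule DERIV_nonpos_imp_nonincreasing[of r rs z, OF True])
      fix x assume x: "r \<le> x" "x \<le> rs"
      then have "a < x" using that by simp
      moreover have "a * h x / (ge * x^2) \<le> 0" using hle[OF \<open>a < x\<close> x(2)] a0 ge0 \<open>a < x\<close>
        by (intro divide_nonpos_pos mult_nonneg_nonpos) (auto simp: mult_nonneg_nonpos)
      ultimately show "\<exists>y. DERIV z x :> y \<and> y \<le> 0" using zd by blast
    qed
  next
    case False
    have "rs \<le> r" using False by simp
    then show ?thesis
    proof (rule DERIV_nonneg_imp_nondecreasing[of rs r z])
      fix x assume x: "rs \<le> x" "x \<le> r"
      then have "a < x" using rsa by simp
      moreover have "a * h x / (ge * x^2) \<ge> 0" using hge[OF x(1)] a0 ge0 \<open>a < x\<close> by simp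
      ultimately show "\<exists>y. DERIV z x :> y \<and> y \<ge> 0" using zd by blast
    qed
  qed
  have lw: "lambertW (alpha * g * eta / exp 1 * (rs / (rs - lam * L))^2 + (g * eta * Ps - 1) / exp 1)
           = rs * ln 2 / W - 1"
  proof (rule lambertW_eq)
    have "c * rs > 0" using c0 rsa a0 by simp
    then show "- 1 \<le> rs * ln 2 / W - 1" unfolding c_def by (simp add: mult.commute)
    define u where "u = rs * ln 2 / W - 1"
    have cu: "c * rs = u + 1" unfolding u_def c_def by simp
    have "exp (c * rs) * (c * rs - 1) = Q + alpha * ge * (rs / (rs - a))^2"
      using rs(3) unfolding h_def g0_def by simp
    then have "exp u * exp 1 * u = Q + alpha * ge * (rs / (rs - a))^2"
      unfolding cu by (simp add: exp_add)
    then have "u * exp u = (Q + alpha * ge * (rs / (rs - a))^2) / exp 1"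
      by (simp add: field_simps)
    then show "(rs * ln 2 / W - 1) * exp (rs * ln 2 / W - 1) =
      alpha * g * eta / exp 1 * (rs / (rs - lam * L))^2 + (g * eta * Ps - 1) / exp 1"
      unfolding u_def Q_def ge_def a_def by (simp add: add_divide_distrib)
  qed
  show ?thesis
    unfolding Let_def Delta_def[symmetric] Po_def[symmetric] Ps_def[symmetric] z_def[symmetric]
    using rsa stat uniq minz lw unfolding a_def by blast
qed

end
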